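(* Let $2\le d_1\le d_2\le d_3\le d_4$, let $2\le s\le d_1$, and let $|\varphi\rangle=\sum_{i,j,k,r}a_{ijkr}|ijkr\rangle$ be a normalized pure state in $H_1\otimes H_2\otimes H_3\otimes H_4$ with $\dim H_i=d_i$. Then $$C^2(|\varphi\rangle)\ \ge\ \frac{1}{\binom{d_1-2}{s-2}\binom{d_2-2}{s-2}\binom{d_3-1}{s-1}\binom{d_4-1}{s-1}}\sum C^2(|\varphi\rangle_{s\otimes s\otimes s\otimes s}),$$ where the sum runs over all pure substates $|\varphi\rangle_{s\otimes s\otimes s\otimes s}=(G_1\otimes G_2\otimes G_3\otimes G_4)|\varphi\rangle$, $G_i=\sum_{x\in S_i}|x\rangle\langle x|$, over all choices of subsets $S_i\subseteq\{1,\dots,d_i\}$ with $|S_i|=s$.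
   Context: $C$ denotes the four-partite concurrence of a (not necessarily normalized) vector $|\psi\rangle$ with $\sigma=|\psi\rangle\langle\psi|$: $C(|\psi\rangle)=2^{-1}\sqrt{14(\mathrm{tr}\,\sigma)^2-\sum_\alpha\mathrm{tr}(\sigma_\alpha^2)}$, $\alpha$ running over the 14 nonempty proper subsets of $\{1,2,3,4\}$ and $\sigma_\alpha=\mathrm{tr}_{\bar\alpha}\sigma$. The computational bases of $H_i\cong\mathbb{C}^{d_i}$ are fixed. *)

theory Defs
  imports Complex_Main "HOL-Library.FuncSet"
begin

text \<open>Party k (k = 0,1,2,3) has dimension d k; basis indices
  are 0..<d k. A (not necessarily normalized) vector is given by its coefficient
  function on index tuples x (functions on {0..<4}).\<close>

definition tuples :: "(nat \<Rightarrow> nat) \<Rightarrow> (nat \<Rightarrow> nat) set" where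
  "tuples d = PiE {0..<4} (\<lambda>k. {0..<d k})"

definition merge :: "nat set \<Rightarrow> (nat \<Rightarrow> nat) \<Rightarrow> (nat \<Rightarrow> nat) \<Rightarrow> (nat \<Rightarrow> nat)" where
  "merge al u v = (\<lambda>k. if k \<in> al then u k else v k)"

text \<open>tr sigma, for sigma = |psi><psi|\<close>
definition trace_proj :: "(nat \<Rightarrow> nat) \<Rightarrow> ((nat \<Rightarrow> nat) \<Rightarrow> complex) \<Rightarrow> real" where
  "trace_proj d a = (\<Sum>x\<in>tuples d. (cmod (a x))^2)"

text \<open>tr (sigma_al^2), sigma_al = partial trace of |psi><psi| over the complement of al,
  written out in coordinates.\<close>
definition reduced_purity :: "(nat \<Rightarrow> nat) \<Rightarrow> ((nat \<Rightarrow> nat) \<Rightarrow> complex) \<Rightarrow> nat set \<Rightarrow> complex" where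
  "reduced_purity d a al = (\<Sum>x\<in>tuples d. \<Sum>y\<in>tuples d.
      a x * cnj (a (merge al y x)) * a y * cnj (a (merge al x y)))"

definition proper_subsets4 :: "nat set set" where
  "proper_subsets4 = {al. al \<subseteq> {0..<4} \<and> al \<noteq> {} \<and> al \<noteq> {0..<4}}"

definition concurrence4 :: "(nat \<Rightarrow> nat) \<Rightarrow> ((nat \<Rightarrow> nat) \<Rightarrow> complex) \<Rightarrow> real" where
  "concurrence4 d a = (1/2) * sqrt (14 * (trace_proj d a)^2
      - (\<Sum>al\<in>proper_subsets4. Re (reduced_purity d a al)))"

text \<open>(G_1 \<otimes> ... \<otimes> G_4)|psi>, G_k the projector onto span{|x> : x \<in> S k}.\<close>
definition substate :: "(nat \<Rightarrow> nat set) \<Rightarrow> ((nat \<Rightarrow> nat) \<Rightarrow> complex) \<Rightarrow> ((nat \<Rightarrow> nat) \<Rightarrow> complex)" where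
  "substate S a = (\<lambda>x. if \<forall>k<4. x k \<in> S k then a x else 0)"

definition subset_choices :: "(nat \<Rightarrow> nat) \<Rightarrow> nat \<Rightarrow> (nat \<Rightarrow> nat set) set" where
  "subset_choices d s = PiE {0..<4} (\<lambda>k. {A. A \<subseteq> {0..<d k} \<and> card A = s})"

end

theory Submission imports Defs begin

definition term4 :: "((nat \<Rightarrow> nat) \<Rightarrow> complex) \<Rightarrow> nat set \<Rightarrow> (nat \<Rightarrow> nat) \<Rightarrow> (nat \<Rightarrow> nat) \<Rightarrow> real" where
  "term4 a al x y = (cmod (a x * a y - a (merge al y x) * a (merge al x y)))^2"

definition Qf :: "(nat \<Rightarrow> nat) \<Rightarrow> ((nat \<Rightarrow> nat) \<Rightarrow> complex) \<Rightarrow> real" where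
  "Qf d a = (\<Sum>al\<in>proper_subsets4. \<Sum>x\<in>tuples d. \<Sum>y\<in>tuples d. term4 a al x y)"

lemma merge_in: "x \<in> tuples d \<Longrightarrow> y \<in> tuples d \<Longrightarrow> merge al x y \<in> tuples d"
  unfolding tuples_def merge_def PiE_def Pi_def extensional_def by auto

lemma merge_inv: "merge al (merge al x y) (merge al y x) = x"
  by (auto simp: merge_def fun_eq_iff)

lemma finite_tuples: "finite (tuples d)"
  unfolding tuples_def by (intro finite_PiE) auto

lemma cmod_diff_sq: "(cmod (u - v))^2 = (cmod u)^2 + (cmod v)^2 - 2 * Re (u * cnj v)"
  by (simp add: cmod_power2 power2_diff algebra_simps)

lemma swap_sum:
  "(\<Sum>x\<in>tuples d. \<Sum>y\<in>tuples d. (cmod (a (merge al y x) * a (merge al x y)))^2)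
   = (\<Sum>x\<in>tuples d. \<Sum>y\<in>tuples d. (cmod (a x * a y))^2)"
proof -
  have "(\<Sum>x\<in>tuples d. \<Sum>y\<in>tuples d. (cmod (a (merge al y x) * a (merge al x y)))^2)
     = (\<Sum>(x,y)\<in>tuples d \<times> tuples d. (cmod (a (merge al y x) * a (merge al x y)))^2)"
    by (rule sum.cartesian_product)
  also have "\<dots> = (\<Sum>(x,y)\<in>tuples d \<times> tuples d. (cmod (a x * a y))^2)"
    by (rule sum.reindex_bij_witness[where i="\<lambda>(x,y). (merge al y x, merge al x y)"
          and j="\<lambda>(x,y). (merge al y x, merge al x y)"])
       (auto simp: merge_inv merge_in)
  also have "\<dots> = (\<Sum>x\<in>tuples d. \<Sum>y\<in>tuples d. (cmod (a x * a y))^2)"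
    by (rule sum.cartesian_product[symmetric])
  finally show ?thesis .
qed

lemma term_sum:
  "(\<Sum>x\<in>tuples d. \<Sum>y\<in>tuples d. term4 a al x y)
   = 2 * (trace_proj d a)^2 - 2 * Re (reduced_purity d a al)"
proof -
  have sq: "(\<Sum>x\<in>tuples d. \<Sum>y\<in>tuples d. (cmod (a x * a y))^2) = (trace_proj d a)^2"
    unfolding trace_proj_def power2_eq_square[of "sum _ _"] sum_product
    by (simp add: norm_mult power_mult_distrib)
  have re: "Re (reduced_purity d a al) = (\<Sum>x\<in>tuples d. \<Sum>y\<in>tuples d.
      Re ((a x * a y) * cnj (a (merge al y x) * a (merge al x y))))"
    unfolding reduced_purity_def Re_sum by (simp add: algebra_simps)
  have "(\<Sum>x\<in>tuples d. \<Sum>y\<in>tuples d. term4 a al x y)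
     = (\<Sum>x\<in>tuples d. \<Sum>y\<in>tuples d. (cmod (a x * a y))^2)
       + (\<Sum>x\<in>tuples d. \<Sum>y\<in>tuples d. (cmod (a (merge al y x) * a (merge al x y)))^2)
       - 2 * (\<Sum>x\<in>tuples d. \<Sum>y\<in>tuples d.
      Re ((a x * a y) * cnj (a (merge al y x) * a (merge al x y))))"
    unfolding term4_def cmod_diff_sq by (simp add: sum.distrib sum_subtractf sum_distrib_left)
  then show ?thesis using sq re swap_sum by simp
qed

lemma card_ps: "card proper_subsets4 = 14"
proof -
  have e: "proper_subsets4 = Pow {0..<4::nat} - {{}, {0..<4}}"
    unfolding proper_subsets4_def by auto
  have "card (Pow {0..<4::nat} - {{}, {0..<4}}) = card (Pow {0..<4::nat}) - card {{}, {0..<4::nat}}"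
    by (rule card_Diff_subset) auto
  also have "\<dots> = 14" by (simp add: card_Pow)
  finally show ?thesis using e by simp
qed

lemma finite_ps: "finite proper_subsets4"
  unfolding proper_subsets4_def by (rule finite_subset[of _ "Pow {0..<4}"]) auto

lemma term4_nonneg: "0 \<le> term4 a al x y" by (simp add: term4_def)

lemma conc_sq: "(concurrence4 d a)^2 = Qf d a / 8"
proof -
  have "Qf d a = (\<Sum>al\<in>proper_subsets4. 2 * (trace_proj d a)^2 - 2 * Re (reduced_purity d a al))"
    unfolding Qf_def term_sum by simp
  also have "\<dots> = 28 * (trace_proj d a)^2 - 2 * (\<Sum>al\<in>proper_subsets4. Re (reduced_purity d a al))"
    by (simp add: sum_subtractf sum_distrib_left[symmetric] card_ps)
  finally have q: "Qf d a = \<dots>" .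
  have nn: "0 \<le> Qf d a" unfolding Qf_def by (intro sum_nonneg term4_nonneg)
  have "14 * (trace_proj d a)^2 - (\<Sum>al\<in>proper_subsets4. Re (reduced_purity d a al)) = Qf d a / 2"
    using q by simp
  note h = this
  have "(concurrence4 d a)^2 = (1/4) * (sqrt (Qf d a / 2))^2"
    unfolding concurrence4_def h by (simp add: power_mult_distrib power_divide)
  also have "\<dots> = Qf d a / 8" using nn by simp
  finally show ?thesis .
qed


lemma term_sub: "term4 (substate S a) al x y =
  (if (\<forall>k<4. x k \<in> S k) \<and> (\<forall>k<4. y k \<in> S k) then term4 a al x y else 0)"
proof (cases "(\<forall>k<4. x k \<in> S k) \<and> (\<forall>k<4. y k \<in> S k)")
  case True
  then have "\<forall>k<4. merge al y x k \<in> S k" "\<forall>k<4. merge al x y k \<in> S k"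
    by (auto simp: merge_def)
  with True show ?thesis by (simp add: term4_def substate_def)
next
  case False
  then obtain k z where k: "k < 4" "z k \<notin> S k" "z = x \<or> z = y" by auto
  have "merge al y x k = z k \<or> merge al x y k = z k"
    using k(3) by (auto simp: merge_def)
  then have p1: "substate S a (merge al y x) * substate S a (merge al x y) = 0"
    using k by (auto simp: substate_def)
  have p2: "substate S a x * substate S a y = 0" using k by (auto simp: substate_def)
  have "term4 (substate S a) al x y = 0" unfolding term4_def p1 p2 by simp
  then show ?thesis by (subst if_not_P[OF False])
qed

lemma card_fix:
  assumes "finite F" "G \<subseteq> F" "card G \<le> s"
  shows "card {A. A \<subseteq> F \<and> card A = s \<and> G \<subseteq> A} = (card F - card G) choose (s - card G)"
proof -
  have fG: "finite G" using assms finite_subset by blast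
  have "bij_betw (\<lambda>A. A - G) {A. A \<subseteq> F \<and> card A = s \<and> G \<subseteq> A} {B. B \<subseteq> F - G \<and> card B = s - card G}"
  proof (rule bij_betw_byWitness[where f'="\<lambda>B. B \<union> G"])
    show "\<forall>A\<in>{A. A \<subseteq> F \<and> card A = s \<and> G \<subseteq> A}. A - G \<union> G = A" by auto
    show "\<forall>B\<in>{B. B \<subseteq> F - G \<and> card B = s - card G}. B \<union> G - G = B" by auto
    show "(\<lambda>A. A - G) ` {A. A \<subseteq> F \<and> card A = s \<and> G \<subseteq> A} \<subseteq> {B. B \<subseteq> F - G \<and> card B = s - card G}"
      using fG by (auto simp: card_Diff_subset)
    show "(\<lambda>B. B \<union> G) ` {B. B \<subseteq> F - G \<and> card B = s - card G} \<subseteq> {A. A \<subseteq> F \<and> card A = s \<and> G \<subseteq> A}"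
    proof clarify
      fix B assume B: "B \<subseteq> F - G" "card B = s - card G"
      have "finite B" using B assms(1) finite_subset by blast
      then have "card (B \<union> G) = card B + card G" using B fG by (subst card_Un_disjoint) auto
      then show "B \<union> G \<subseteq> F \<and> card (B \<union> G) = s \<and> G \<subseteq> B \<union> G" using B assms by auto
    qed
  qed
  then have "card {A. A \<subseteq> F \<and> card A = s \<and> G \<subseteq> A} = card {B. B \<subseteq> F - G \<and> card B = s - card G}"
    by (rule bij_betw_same_card)
  also have "\<dots> = card (F - G) choose (s - card G)" using assms by (intro n_subsets) auto
  also have "card (F - G) = card F - card G" using assms fG by (simp add: card_Diff_subset)
  finally show ?thesis .
qed

lemma finite_choices: "finite (subset_choices d s)"
  unfolding subset_choices_def
  by (intro finite_PiE) (auto intro: finite_subset[of _ "Pow {0..<d _}"])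

lemma card_N:
  assumes "x \<in> tuples d" "y \<in> tuples d"
  shows "card {S \<in> subset_choices d s. (\<forall>k<4. x k \<in> S k) \<and> (\<forall>k<4. y k \<in> S k)}
    = (\<Prod>k\<in>{0..<4}. card {A. A \<subseteq> {0..<d k} \<and> card A = s \<and> {x k, y k} \<subseteq> A})"
proof -
  have "{S \<in> subset_choices d s. (\<forall>k<4. x k \<in> S k) \<and> (\<forall>k<4. y k \<in> S k)}
     = PiE {0..<4} (\<lambda>k. {A. A \<subseteq> {0..<d k} \<and> card A = s \<and> {x k, y k} \<subseteq> A})"
    unfolding subset_choices_def by (simp add: PiE_iff set_eq_iff Ball_def atLeastLessThan_iff) blast
  then show ?thesis by (simp add: card_PiE)
qed

lemma prod_le_pair:
  fixes g :: "nat \<Rightarrow> real"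
  assumes "\<And>k. 0 \<le> g k" "\<And>k. g k \<le> 1" "i < 4" "j < 4" "i \<noteq> j"
  shows "(\<Prod>k\<in>{0..<4}. g k) \<le> g i * g j"
proof -
  have "(\<Prod>k\<in>{0..<4}. g k) = g i * (\<Prod>k\<in>{0..<4}-{i}. g k)"
    using assms by (subst prod.remove[of _ i]) auto
  also have "(\<Prod>k\<in>{0..<4}-{i}. g k) = g j * (\<Prod>k\<in>{0..<4}-{i}-{j}. g k)"
    using assms by (subst prod.remove[of _ j]) auto
  also have "(\<Prod>k\<in>{0..<4}-{i}-{j}. g k) \<le> 1" using assms by (intro prod_le_1) auto
  finally show ?thesis using assms
    by (simp add: mult_left_le mult_nonneg_nonneg mult_left_mono)
qed

lemma diff_coords:
  assumes "x \<in> tuples d" "y \<in> tuples d" "term4 a al x y \<noteq> 0"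
  shows "\<exists>i j. i < 4 \<and> j < 4 \<and> i \<noteq> j \<and> x i \<noteq> y i \<and> x j \<noteq> y j"
proof (rule ccontr)
  assume H: "\<not> ?thesis"
  have out: "\<And>k. x k \<noteq> y k \<Longrightarrow> k < 4" using assms(1,2)
    unfolding tuples_def by (metis PiE_arb atLeastLessThan_iff not_less zero_le)
  have "(\<forall>k\<in>al. x k = y k) \<or> (\<forall>k. k \<notin> al \<longrightarrow> x k = y k)"
    using H out by blast
  then show False
  proof
    assume "\<forall>k\<in>al. x k = y k"
    then have "merge al y x = x" "merge al x y = y" by (auto simp: merge_def fun_eq_iff)
    then show False using assms(3) by (simp add: term4_def)
  next
    assume "\<forall>k. k \<notin> al \<longrightarrow> x k = y k"
    then have "merge al y x = y" "merge al x y = x" by (auto simp: merge_def fun_eq_iff)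
    then show False using assms(3) by (simp add: term4_def mult.commute)
  qed
qed


lemma sum_if_card: "finite A \<Longrightarrow> (\<Sum>S\<in>A. if P S then (c::real) else 0) = c * real (card {S\<in>A. P S})"
  by (simp add: sum.inter_filter[symmetric])

lemma sum_sub:
  "(\<Sum>S\<in>subset_choices d s. Qf d (substate S a)) =
   (\<Sum>al\<in>proper_subsets4. \<Sum>x\<in>tuples d. \<Sum>y\<in>tuples d. term4 a al x y *
      real (card {S\<in>subset_choices d s. (\<forall>k<4. x k \<in> S k) \<and> (\<forall>k<4. y k \<in> S k)}))"
proof -
  have "(\<Sum>S\<in>subset_choices d s. Qf d (substate S a)) =
    (\<Sum>S\<in>subset_choices d s. \<Sum>al\<in>proper_subsets4. \<Sum>x\<in>tuples d. \<Sum>y\<in>tuples d.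
      (if (\<forall>k<4. x k \<in> S k) \<and> (\<forall>k<4. y k \<in> S k) then term4 a al x y else 0))"
    unfolding Qf_def term_sub by simp
  also have "\<dots> = (\<Sum>al\<in>proper_subsets4. \<Sum>S\<in>subset_choices d s. \<Sum>x\<in>tuples d. \<Sum>y\<in>tuples d.
      (if (\<forall>k<4. x k \<in> S k) \<and> (\<forall>k<4. y k \<in> S k) then term4 a al x y else 0))"
    by (rule sum.swap)
  also have "\<dots> = (\<Sum>al\<in>proper_subsets4. \<Sum>x\<in>tuples d. \<Sum>S\<in>subset_choices d s. \<Sum>y\<in>tuples d.
      (if (\<forall>k<4. x k \<in> S k) \<and> (\<forall>k<4. y k \<in> S k) then term4 a al x y else 0))"
    by (intro sum.cong refl sum.swap)
  also have "\<dots> = (\<Sum>al\<in>proper_subsets4. \<Sum>x\<in>tuples d. \<Sum>y\<in>tuples d. \<Sum>S\<in>subset_choices d s.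
      (if (\<forall>k<4. x k \<in> S k) \<and> (\<forall>k<4. y k \<in> S k) then term4 a al x y else 0))"
    by (intro sum.cong refl sum.swap)
  also have "\<dots> = (\<Sum>al\<in>proper_subsets4. \<Sum>x\<in>tuples d. \<Sum>y\<in>tuples d. term4 a al x y *
      real (card {S\<in>subset_choices d s. (\<forall>k<4. x k \<in> S k) \<and> (\<forall>k<4. y k \<in> S k)}))"
    by (intro sum.cong refl sum_if_card finite_choices)
  finally show ?thesis .
qed

theorem mainTheorem6:
  fixes d :: "nat \<Rightarrow> nat" and s :: nat and a :: "(nat \<Rightarrow> nat) \<Rightarrow> complex"
  assumes "2 \<le> d 0" "d 0 \<le> d 1" "d 1 \<le> d 2" "d 2 \<le> d 3"
    and "2 \<le> s" "s \<le> d 0"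
    and "trace_proj d a = 1"
  shows "(concurrence4 d a)^2 \<ge>
    (1 / (real ((d 0 - 2) choose (s - 2)) * real ((d 1 - 2) choose (s - 2))
          * real ((d 2 - 1) choose (s - 1)) * real ((d 3 - 1) choose (s - 1))))
    * (\<Sum>S\<in>subset_choices d s. (concurrence4 d (substate S a))^2)"
proof -
  define e where "e k = real ((d k - 1) choose (s - 1))" for k
  define f where "f k = real ((d k - 2) choose (s - 2))" for k
  define r where "r k = real (s - 1) / real (d k - 1)" for k
  define D where "D = f 0 * f 1 * e 2 * e 3"
  define N where "N x y = card {S\<in>subset_choices d s. (\<forall>k<4. x k \<in> S k) \<and> (\<forall>k<4. y k \<in> S k)}" for x y
  have dm: "d k \<le> d l" if "k \<le> l" "l < 4" for k l
    using that assms(2-4) by (auto simp: eval_nat_numeral le_Suc_eq less_Suc_eq)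
  have dk: "2 \<le> d k" "s \<le> d k" if "k < 4" for k
    using dm[of 0 k] that assms(1,6) by auto
  have epos: "0 < e k" if "k < 4" for k
    using dk[OF that] unfolding e_def by (simp add: zero_less_binomial)
  have fe: "f k = e k * r k" if "k < 4" for k
  proof -
    have "Suc (d k - 2) * ((d k - 2) choose (s - 2)) = (Suc (d k - 2) choose Suc (s - 2)) * Suc (s - 2)"
      by (rule Suc_times_binomial_eq)
    moreover have "Suc (d k - 2) = d k - 1" "Suc (s - 2) = s - 1" using dk[OF that] assms(5) by auto
    ultimately have "(d k - 1) * ((d k - 2) choose (s - 2)) = ((d k - 1) choose (s - 1)) * (s - 1)"
      by simp
    then have "real (d k - 1) * f k = e k * real (s - 1)"
      unfolding e_def f_def by (metis of_nat_mult)
    moreover have "real (d k - 1) > 0" using dk[OF that] by simp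
    ultimately show ?thesis unfolding r_def by (simp add: field_simps)
  qed
  have r0: "0 \<le> r k" for k unfolding r_def by simp
  have r1: "r k \<le> 1" if "k < 4" for k
    using dk[OF that] assms(5) unfolding r_def by (simp add: divide_le_eq_1)
  have ranti: "r l \<le> r k" if "k \<le> l" "l < 4" for k l
  proof -
    have "real (d k - 1) \<le> real (d l - 1)" "0 < real (d k - 1)"
      using dm[OF that] dk[of k] that by auto
    then show ?thesis unfolding r_def by (intro divide_left_mono) auto
  qed
  have fpos: "0 < f k" if "k < 4" for k
    using dk[OF that] unfolding f_def by (simp add: zero_less_binomial)
  have Dpos: "0 < D" unfolding D_def using epos fpos by simp
  have NB: "real (N x y) \<le> D" if xy: "x \<in> tuples d" "y \<in> tuples d" and t: "term4 a al x y \<noteq> 0" for x y al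
  proof -
    obtain i j where ij: "i < 4" "j < 4" "i \<noteq> j" "x i \<noteq> y i" "x j \<noteq> y j"
      using diff_coords[OF xy t] by blast
    define g where "g k = (if k < 4 \<and> x k \<noteq> y k then r k else 1)" for k
    have xyb: "x k < d k" "y k < d k" if "k < 4" for k
      using xy that unfolding tuples_def by (auto simp: PiE_iff)
    have ck: "real (card {A. A \<subseteq> {0..<d k} \<and> card A = s \<and> {x k, y k} \<subseteq> A}) = e k * g k"
      if "k \<in> {0..<4}" for k
    proof -
      have k4: "k < 4" using that by simp
      have cg: "card {x k, y k} = (if x k = y k then 1 else 2)" by simp
      have "card {A. A \<subseteq> {0..<d k} \<and> card A = s \<and> {x k, y k} \<subseteq> A}
          = (d k - card {x k, y k}) choose (s - card {x k, y k})"
        using xyb[OF k4] assms(5) cg by (subst card_fix) auto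
      then show ?thesis using fe[OF k4] cg unfolding e_def f_def g_def
        by (cases "x k = y k") (auto simp: k4)
    qed
    have "real (N x y) = (\<Prod>k\<in>{0..<4}. e k * g k)"
      unfolding N_def card_N[OF xy] of_nat_prod using ck by (rule prod.cong[OF refl])
    also have "\<dots> = (\<Prod>k\<in>{0..<4}. e k) * (\<Prod>k\<in>{0..<4}. g k)" by (rule prod.distrib)
    also have "\<dots> \<le> (\<Prod>k\<in>{0..<4}. e k) * (g i * g j)"
    proof (rule mult_left_mono)
      show "(\<Prod>k\<in>{0..<4}. g k) \<le> g i * g j"
        using ij by (intro prod_le_pair) (auto simp: g_def r0 r1)
      show "0 \<le> (\<Prod>k\<in>{0..<4}. e k)" using epos by (intro prod_nonneg) (auto intro: less_imp_le)
    qed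
    also have "\<dots> \<le> (\<Prod>k\<in>{0..<4}. e k) * (r 0 * r 1)"
    proof (rule mult_left_mono)
      have "g i * g j = r i * r j" using ij by (simp add: g_def)
      also have "r i * r j \<le> r 0 * r 1"
      proof (cases "i < j")
        case True
        then show ?thesis using ij ranti[of 0 i] ranti[of 1 j] r0 by (intro mult_mono) auto
      next
        case False
        then have "r j * r i \<le> r 0 * r 1" using ij ranti[of 0 j] ranti[of 1 i] r0 by (intro mult_mono) auto
        then show ?thesis by (simp add: mult.commute)
      qed
      finally show "g i * g j \<le> r 0 * r 1" .
      show "0 \<le> (\<Prod>k\<in>{0..<4}. e k)" using epos by (intro prod_nonneg) (auto intro: less_imp_le)
    qed
    also have "(\<Prod>k\<in>{0..<4}. e k) * (r 0 * r 1) = D"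
    proof -
      have "{0..<4::nat} = {0,1,2,3}" by auto
      then have "(\<Prod>k\<in>{0..<4}. e k) = e 0 * e 1 * e 2 * e 3" by simp
      then show ?thesis unfolding D_def using fe[of 0] fe[of 1] by simp
    qed
    finally show ?thesis .
  qed
  have S1: "(\<Sum>S\<in>subset_choices d s. Qf d (substate S a)) \<le> D * Qf d a"
  proof -
    have "(\<Sum>S\<in>subset_choices d s. Qf d (substate S a)) =
      (\<Sum>al\<in>proper_subsets4. \<Sum>x\<in>tuples d. \<Sum>y\<in>tuples d. term4 a al x y * real (N x y))"
      unfolding sum_sub N_def ..
    also have "\<dots> \<le> (\<Sum>al\<in>proper_subsets4. \<Sum>x\<in>tuples d. \<Sum>y\<in>tuples d. term4 a al x y * D)"
    proof (intro sum_mono)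
      fix al x y assume "x \<in> tuples d" "y \<in> tuples d"
      then show "term4 a al x y * real (N x y) \<le> term4 a al x y * D"
        using NB[of x y al] term4_nonneg[of a al x y]
        by (cases "term4 a al x y = 0") (auto intro: mult_left_mono)
    qed
    also have "\<dots> = D * Qf d a" unfolding Qf_def by (simp add: sum_distrib_left mult.commute)
    finally show ?thesis .
  qed
  have DD: "real ((d 0 - 2) choose (s - 2)) * real ((d 1 - 2) choose (s - 2))
          * real ((d 2 - 1) choose (s - 1)) * real ((d 3 - 1) choose (s - 1)) = D"
    unfolding D_def e_def f_def by simp
  have "(1 / D) * (\<Sum>S\<in>subset_choices d s. (concurrence4 d (substate S a))^2)
      = (1 / D) * (\<Sum>S\<in>subset_choices d s. Qf d (substate S a)) / 8"
    unfolding conc_sq by (simp add: sum_divide_distrib mult.commute)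
  also have "\<dots> \<le> (1 / D) * (D * Qf d a) / 8"
    using S1 Dpos by (intro divide_right_mono mult_left_mono) auto
  also have "\<dots> = (concurrence4 d a)^2" using Dpos unfolding conc_sq by simp
  finally show ?thesis unfolding DD .
qed
end
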